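(* In the category of pointed Frölicher spaces, let $A\subseteq X$ be a subspace containing the basepoint such that $(X,A)$ is an SNDR pair, let $i:A\hookrightarrow X$ be the inclusion and $p:X\to X/A$ the quotient map. Then the sequence $A\xrightarrow{i}X\xrightarrow{p}X/A$ is right exact: for every pointed Frölicher space $W$ the sequence of pointed sets $[X/A,W]\xrightarrow{p^*}[X,W]\xrightarrow{i^*}[A,W]$ is exact, i.e. $\operatorname{im}p^*=(i^* )^{-1}(\ast)$.
   Context: A Frölicher space is a triple $(X,\mathcal C_X,\mathcal F_X)$ with $\mathcal C_X\subseteq X^{\mathbb R}$, $\mathcal F_X\subseteq\mathbb R^X$, such that $\mathcal F_X=\{f\mid f\circ c\in C^\infty(\mathbb R,\mathbb R)\ \forall c\in\mathcal C_X\}$ and $\mathcal C_X=\{c\mid f\circ c\in C^\infty(\mathbb R,\mathbb R)\ \forall f\in\mathcal F_X\}$. Smooth maps: $g\circ\varphi\in\mathcal F_X$ for all $g\in\mathcal F_Y$. Subspaces carry the initial structure, products the structure generated by $f\circ\pi_i$, quotients the final structure. $I$ is $[0,1]$ with the subspace structure from $\mathbb R$; $\mathbf I$ is $[0,1]$ with the structure generated by those structure functions of $I$ that are constant on $[0,\epsilon)$ and on $(1-\epsilon,1]$ for some $0<\epsilon<1/4$. Pointed Frölicher spaces have a distinguished basepoint; maps preserve basepoints. For pointed $X,W$, $[X,W]$ is the set of classes of basepoint-preserving smooth maps modulo pointed smooth homotopy (smooth $H:I\times X\to W$ with $H(t,x_0)=w_0$ for all $t$), pointed by the class of the constant map; $g^*$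 denotes precomposition with $g$. FCIP: For a smooth $i:A\to X$ and a structure curve $x:\mathbb R\to X$ let $\Lambda(x,i)$ be the set of $s_*\in x^{-1}(i(A))$ that are limits of sequences $s_n\in x^{-1}(X\setminus i(A))$. A structure function $g$ on $\mathbf I\times X$ has the FCIP w.r.t. $i$ if $g\circ c$ is $C^\infty$ for every map $c=(t,x):\mathbb R\to[0,1]\times X$ with $x$ a structure curve and, for every $\epsilon>0$, $t$ $C^\infty$ on every open interval disjoint from $\bigcup_{s_*\in\Lambda(x,i)}[s_*-\epsilon,s_*+\epsilon]$; a map $g:\mathbf I\times X\to Z$ has the FCIP if $h\circ g$ does for all $h\in\mathcal F_Z$. SNDR pair: $(X,A)$ is an SNDR pair if there are a smooth $u:X\to\mathbf I$ with $u^{-1}(0)=A$ and a smooth $H:\mathbf I\times X\to X$ with the FCIP w.r.t. $i$, $H(0,x)=x$, $H(t,a)=a$ for $a\in A$, and $H(1,x)\in A$ whenever $u(x)<1$. *)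

theory Defs
  imports "HOL-Analysis.Analysis"
begin

definition Cinf_on :: "real set \<Rightarrow> (real \<Rightarrow> real) \<Rightarrow> bool" where
  "Cinf_on U f \<longleftrightarrow> (\<forall>n. \<forall>x\<in>U. ((deriv ^^ n) f) differentiable (at x))"

definition Cinf :: "(real \<Rightarrow> real) \<Rightarrow> bool" where
  "Cinf f \<longleftrightarrow> Cinf_on UNIV f"

record 'a frol =
  fcar :: "'a set"
  fcurv :: "(real \<Rightarrow> 'a) set"
  ffun :: "('a \<Rightarrow> real) set"

definition frolicher :: "'a frol \<Rightarrow> bool" where
  "frolicher X \<longleftrightarrow>
     ffun X = {f. \<forall>c\<in>fcurv X. Cinf (f \<circ> c)} \<and>
     fcurv X = {c. (\<forall>s. c s \<in> fcar X) \<and> (\<forall>f\<in>ffun X. Cinf (f \<circ> c))}"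

definition gen_by_funs :: "'a set \<Rightarrow> ('a \<Rightarrow> real) set \<Rightarrow> 'a frol" where
  "gen_by_funs S F0 =
     (let C = {c. (\<forall>s. c s \<in> S) \<and> (\<forall>f\<in>F0. Cinf (f \<circ> c))}
      in \<lparr>fcar = S, fcurv = C, ffun = {f. \<forall>c\<in>C. Cinf (f \<circ> c)}\<rparr>)"

definition gen_by_curves :: "'a set \<Rightarrow> (real \<Rightarrow> 'a) set \<Rightarrow> 'a frol" where
  "gen_by_curves S C0 =
     (let F = {f. \<forall>c\<in>C0. Cinf (f \<circ> c)}
      in \<lparr>fcar = S, fcurv = {c. (\<forall>s. c s \<in> S) \<and> (\<forall>f\<in>F. Cinf (f \<circ> c))}, ffun = F\<rparr>)"

definition smooth_map :: "'a frol \<Rightarrow> 'b frol \<Rightarrow> ('a \<Rightarrow> 'b) \<Rightarrow> bool" where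
  "smooth_map X Y \<phi> \<longleftrightarrow> (\<forall>x\<in>fcar X. \<phi> x \<in> fcar Y) \<and> (\<forall>g\<in>ffun Y. g \<circ> \<phi> \<in> ffun X)"

definition frol_subspace :: "'a frol \<Rightarrow> 'a set \<Rightarrow> 'a frol" where
  "frol_subspace X A = gen_by_funs A (ffun X)"

definition prod_frol :: "'a frol \<Rightarrow> 'b frol \<Rightarrow> ('a \<times> 'b) frol" where
  "prod_frol X Y = gen_by_funs (fcar X \<times> fcar Y)
      ({f \<circ> fst | f. f \<in> ffun X} \<union> {g \<circ> snd | g. g \<in> ffun Y})"

text \<open>Quotient X/A collapsing A to a point; the class of x is A if x is in A, else {x}.\<close>
definition collapse :: "'a set \<Rightarrow> 'a \<Rightarrow> 'a set" where
  "collapse A x = (if x \<in> A then A else {x})"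

definition quotient_frol :: "'a frol \<Rightarrow> 'a set \<Rightarrow> 'a set frol" where
  "quotient_frol X A = gen_by_curves (collapse A ` fcar X) {collapse A \<circ> c | c. c \<in> fcurv X}"

definition real_frol :: "real frol" where
  "real_frol = \<lparr>fcar = UNIV, fcurv = {c. Cinf c}, ffun = {f. Cinf f}\<rparr>"

definition unitI :: "real frol" where
  "unitI = frol_subspace real_frol {0..1}"

definition boldI :: "real frol" where
  "boldI = gen_by_funs {0..1}
     {f \<in> ffun unitI. \<exists>\<epsilon>. 0 < \<epsilon> \<and> \<epsilon> < 1/4 \<and>
         (\<forall>x. 0 \<le> x \<and> x < \<epsilon> \<longrightarrow> f x = f 0) \<and>
         (\<forall>x. 1 - \<epsilon> < x \<and> x \<le> 1 \<longrightarrow> f x = f 1)}"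

definition Lambda_set :: "'a frol \<Rightarrow> 'a set \<Rightarrow> (real \<Rightarrow> 'a) \<Rightarrow> real set" where
  "Lambda_set X A x = {s. x s \<in> A \<and>
      (\<exists>sn. (\<forall>n. x (sn n) \<in> fcar X - A) \<and> sn \<longlonglongrightarrow> s)}"

definition fcip_fun :: "'a frol \<Rightarrow> 'a set \<Rightarrow> (real \<times> 'a \<Rightarrow> real) \<Rightarrow> bool" where
  "fcip_fun X A g \<longleftrightarrow>
     (\<forall>t x. x \<in> fcurv X \<longrightarrow> (\<forall>s. t s \<in> {0..1}) \<longrightarrow>
        (\<forall>\<epsilon>>0. \<forall>a b. {a<..<b} \<inter> (\<Union>s\<in>Lambda_set X A x. {s-\<epsilon>..s+\<epsilon>}) = {}
               \<longrightarrow> Cinf_on {a<..<b} t) \<longrightarrow>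
        Cinf (g \<circ> (\<lambda>s. (t s, x s))))"

definition fcip_map :: "'a frol \<Rightarrow> 'a set \<Rightarrow> 'c frol \<Rightarrow> (real \<times> 'a \<Rightarrow> 'c) \<Rightarrow> bool" where
  "fcip_map X A Z g \<longleftrightarrow> (\<forall>h\<in>ffun Z. fcip_fun X A (h \<circ> g))"

definition SNDR :: "'a frol \<Rightarrow> 'a set \<Rightarrow> bool" where
  "SNDR X A \<longleftrightarrow> (\<exists>u H.
     smooth_map X boldI u \<and> {x\<in>fcar X. u x = 0} = A \<and>
     smooth_map (prod_frol boldI X) X H \<and> fcip_map X A X H \<and>
     (\<forall>x\<in>fcar X. H (0, x) = x) \<and>
     (\<forall>t\<in>{0..1}. \<forall>a\<in>A. H (t, a) = a) \<and>
     (\<forall>x\<in>fcar X. u x < 1 \<longrightarrow> H (1, x) \<in> A))"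

definition pmaps :: "'a frol \<Rightarrow> 'a \<Rightarrow> 'b frol \<Rightarrow> 'b \<Rightarrow> ('a \<Rightarrow> 'b) set" where
  "pmaps X x0 W w0 = {f. smooth_map X W f \<and> f x0 = w0}"

definition phomotopic :: "'a frol \<Rightarrow> 'a \<Rightarrow> 'b frol \<Rightarrow> 'b \<Rightarrow> ('a \<Rightarrow> 'b) \<Rightarrow> ('a \<Rightarrow> 'b) \<Rightarrow> bool" where
  "phomotopic X x0 W w0 f g \<longleftrightarrow> (\<exists>H. smooth_map (prod_frol unitI X) W H \<and>
      (\<forall>x\<in>fcar X. H (0, x) = f x \<and> H (1, x) = g x) \<and>
      (\<forall>t\<in>{0..1}. H (t, x0) = w0))"

definition htpy_rel :: "'a frol \<Rightarrow> 'a \<Rightarrow> 'b frol \<Rightarrow> 'b \<Rightarrow> ('a \<Rightarrow> 'b) \<Rightarrow> ('a \<Rightarrow> 'b) \<Rightarrow> bool" where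
  "htpy_rel X x0 W w0 = equivclp (\<lambda>f g. f \<in> pmaps X x0 W w0 \<and> g \<in> pmaps X x0 W w0 \<and>
                                         phomotopic X x0 W w0 f g)"

definition hcls :: "'a frol \<Rightarrow> 'a \<Rightarrow> 'b frol \<Rightarrow> 'b \<Rightarrow> ('a \<Rightarrow> 'b) \<Rightarrow> ('a \<Rightarrow> 'b) set" where
  "hcls X x0 W w0 f = {g \<in> pmaps X x0 W w0. htpy_rel X x0 W w0 f g}"

text \<open>The pointed set [X,W] (its basepoint is the class of the constant map).\<close>
definition htpy_set :: "'a frol \<Rightarrow> 'a \<Rightarrow> 'b frol \<Rightarrow> 'b \<Rightarrow> ('a \<Rightarrow> 'b) set set" where
  "htpy_set X x0 W w0 = hcls X x0 W w0 ` pmaps X x0 W w0"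

text \<open>Induced map g^* : [Y,W] \<rightarrow> [X,W] for g : X \<rightarrow> Y, on a class via a representative.\<close>
definition pullback :: "'a frol \<Rightarrow> 'a \<Rightarrow> 'b frol \<Rightarrow> 'b \<Rightarrow> ('a \<Rightarrow> 'c)
                         \<Rightarrow> ('c \<Rightarrow> 'b) set \<Rightarrow> ('a \<Rightarrow> 'b) set" where
  "pullback X x0 W w0 g c = hcls X x0 W w0 ((SOME f. f \<in> c) \<circ> g)"

end

theory Submission
  imports Defs "HOL-Computational_Algebra.Polynomial"
begin
lemma Cinf_coind:
  assumes T: "\<And>f. f \<in> T \<Longrightarrow> (\<forall>x. f differentiable (at x)) \<and> deriv f \<in> T" and "f \<in> T"
  shows "Cinf f"
proof -
  have "(deriv ^^ n) f \<in> T" for n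
    by (induction n) (use assms in auto)
  then show ?thesis using T unfolding Cinf_def Cinf_on_def by blast
qed

lemma Cinf_diff: "Cinf f \<Longrightarrow> f differentiable (at x)"
  unfolding Cinf_def Cinf_on_def by (metis UNIV_I funpow_0)

lemma Cinf_deriv: "Cinf f \<Longrightarrow> Cinf (deriv f)"
  unfolding Cinf_def Cinf_on_def by (metis funpow_Suc_right o_apply)

lemma Cinf_DERIV: "Cinf f \<Longrightarrow> DERIV f x :> deriv f x"
  using Cinf_diff DERIV_deriv_iff_real_differentiable by blast

lemma Cinf_cont: "Cinf f \<Longrightarrow> isCont f x"
  using Cinf_DERIV DERIV_isCont by blast

lemma Cinf_affine: "Cinf (\<lambda>x. (a::real) * x + b)"
proof (rule Cinf_coind[where T="{(\<lambda>x::real. a * x + b) | a b. True}"])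
  fix f :: "real \<Rightarrow> real" assume "f \<in> {(\<lambda>x::real. a * x + b) | a b. True}"
  then obtain a b :: real where f: "f = (\<lambda>x. a * x + b)" by blast
  have d: "DERIV f x :> a" for x unfolding f by (auto intro!: derivative_eq_intros)
  then have "deriv f = (\<lambda>x. 0 * x + a)" by (auto intro!: ext DERIV_imp_deriv)
  then show "(\<forall>x. f differentiable (at x)) \<and> deriv f \<in> {(\<lambda>x. a * x + b) | a b. True}"
    using d real_differentiable_def by blast
qed auto

lemma Cinf_const: "Cinf (\<lambda>x. c)"
  using Cinf_affine[of 0 c] by simp

lemma Cinf_id: "Cinf (\<lambda>x. x)"
  using Cinf_affine[of 1 0] by simp

lemma Cinf_add:
  assumes "Cinf f" "Cinf g" shows "Cinf (\<lambda>x. f x + g x)"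
proof (rule Cinf_coind[where T="{(\<lambda>x. f x + g x) | f g. Cinf f \<and> Cinf g}"])
  fix h assume "h \<in> {(\<lambda>x. f x + g x) | f g. Cinf f \<and> Cinf g}"
  then obtain f g where h: "h = (\<lambda>x. f x + g x)" "Cinf f" "Cinf g" by blast
  have d: "DERIV h x :> deriv f x + deriv g x" for x
    unfolding h by (intro DERIV_add Cinf_DERIV h)
  then have "deriv h = (\<lambda>x. deriv f x + deriv g x)" by (auto intro!: ext DERIV_imp_deriv)
  then show "(\<forall>x. h differentiable (at x)) \<and> deriv h \<in> {(\<lambda>x. f x + g x) | f g. Cinf f \<and> Cinf g}"
    using d real_differentiable_def h Cinf_deriv by blast
qed (use assms in auto)

inductive PP :: "(real \<Rightarrow> real) \<Rightarrow> bool" where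
  PP1: "Cinf f \<Longrightarrow> Cinf g \<Longrightarrow> PP (\<lambda>x. f x * g x)"
| PP2: "PP a \<Longrightarrow> PP b \<Longrightarrow> PP (\<lambda>x. a x + b x)"

lemma PP_step: "PP h \<Longrightarrow> (\<forall>x. h differentiable (at x)) \<and> PP (deriv h)"
proof (induction rule: PP.induct)
  case (PP1 f g)
  have d: "DERIV (\<lambda>x. f x * g x) x :> deriv f x * g x + f x * deriv g x" for x
    using DERIV_mult[OF Cinf_DERIV[OF PP1(1)] Cinf_DERIV[OF PP1(2)]] by (simp add: algebra_simps)
  then have "deriv (\<lambda>x. f x * g x) = (\<lambda>x. deriv f x * g x + f x * deriv g x)"
    by (auto intro!: ext DERIV_imp_deriv)
  moreover have "PP (\<lambda>x. deriv f x * g x + f x * deriv g x)"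
    by (intro PP.intros Cinf_deriv PP1)
  ultimately show ?case using d real_differentiable_def by metis
next
  case (PP2 a b)
  have d: "DERIV (\<lambda>x. a x + b x) x :> deriv a x + deriv b x" for x
    using PP2 by (intro DERIV_add) (auto simp: DERIV_deriv_iff_real_differentiable)
  then have "deriv (\<lambda>x. a x + b x) = (\<lambda>x. deriv a x + deriv b x)"
    by (auto intro!: ext DERIV_imp_deriv)
  then show ?case using d real_differentiable_def PP2 PP.intros(2) by metis
qed

lemma Cinf_mult:
  assumes "Cinf f" "Cinf g" shows "Cinf (\<lambda>x. f x * g x)"
  by (rule Cinf_coind[where T="Collect PP"]) (use PP_step PP1 assms in auto)

inductive QQ :: "(real \<Rightarrow> real) \<Rightarrow> (real \<Rightarrow> real) \<Rightarrow> bool" for g where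
  QQ1: "Cinf f \<Longrightarrow> Cinf h \<Longrightarrow> QQ g (\<lambda>x. f (g x) * h x)"
| QQ2: "QQ g a \<Longrightarrow> QQ g b \<Longrightarrow> QQ g (\<lambda>x. a x + b x)"

lemma QQ_step: assumes g: "Cinf g" shows "QQ g h \<Longrightarrow> (\<forall>x. h differentiable (at x)) \<and> QQ g (deriv h)"
proof (induction rule: QQ.induct)
  case (QQ1 f h)
  have d: "DERIV (\<lambda>x. f (g x) * h x) x :> deriv f (g x) * (deriv g x * h x) + f (g x) * deriv h x" for x
  proof -
    have "DERIV (\<lambda>x. f (g x)) x :> deriv f (g x) * deriv g x"
      by (rule DERIV_chain2[OF Cinf_DERIV Cinf_DERIV]) (use QQ1 g in auto)
    from DERIV_mult[OF this Cinf_DERIV[OF QQ1(2)]] show ?thesis by (simp add: algebra_simps)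
  qed
  then have "deriv (\<lambda>x. f (g x) * h x) = (\<lambda>x. deriv f (g x) * (deriv g x * h x) + f (g x) * deriv h x)"
    by (auto intro!: ext DERIV_imp_deriv)
  moreover have "QQ g (\<lambda>x. deriv f (g x) * (deriv g x * h x) + f (g x) * deriv h x)"
    by (intro QQ.intros Cinf_deriv Cinf_mult QQ1 g)
  ultimately show ?case using d real_differentiable_def by metis
next
  case (QQ2 a b)
  have d: "DERIV (\<lambda>x. a x + b x) x :> deriv a x + deriv b x" for x
    using QQ2 by (intro DERIV_add) (auto simp: DERIV_deriv_iff_real_differentiable)
  then have "deriv (\<lambda>x. a x + b x) = (\<lambda>x. deriv a x + deriv b x)"
    by (auto intro!: ext DERIV_imp_deriv)
  then show ?case using d real_differentiable_def QQ2 QQ.intros(2) by metis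
qed

lemma Cinf_compose:
  assumes "Cinf f" "Cinf g" shows "Cinf (\<lambda>x. f (g x))"
proof -
  have "QQ g (\<lambda>x. f (g x) * 1)" by (intro QQ1 assms Cinf_const)
  then show ?thesis
    by (intro Cinf_coind[where T="Collect (QQ g)"]) (use QQ_step assms in auto)
qed

lemma Cinf_o: "Cinf f \<Longrightarrow> Cinf g \<Longrightarrow> Cinf (f \<circ> g)"
  unfolding comp_def by (rule Cinf_compose)

lemma Cinf_divpow_step:
  assumes g: "Cinf g" "\<And>x. g x \<noteq> 0" and f: "Cinf f"
  shows "DERIV (\<lambda>x. f x / g x ^ n) x :> (deriv f x * g x - real n * f x * deriv g x) / g x ^ Suc n"
proof -
  have "DERIV (\<lambda>x. f x / g x ^ n) x :> (deriv f x * g x ^ n - f x * (real n * g x ^ (n - 1) * deriv g x)) / (g x ^ n * g x ^ n)"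
    using DERIV_divide[OF Cinf_DERIV[OF f] DERIV_power[OF Cinf_DERIV[OF g(1)]]] g(2)[of x]
    by (simp add: algebra_simps)
  moreover have "(deriv f x * g x ^ n - f x * (real n * g x ^ (n - 1) * deriv g x)) / (g x ^ n * g x ^ n)
       = (deriv f x * g x - real n * f x * deriv g x) / g x ^ Suc n"
  proof (cases n)
    case 0 then show ?thesis using g(2)[of x] by (simp add: field_simps)
  next
    case (Suc m) then show ?thesis using g(2)[of x] by (simp add: field_simps power_Suc)
  qed
  ultimately show ?thesis by simp
qed

lemma Cinf_divide:
  assumes g: "Cinf g" "\<And>x. g x \<noteq> 0" and f: "Cinf f"
  shows "Cinf (\<lambda>x. f x / g x)"
proof -
  let ?T = "{(\<lambda>x. f x / g x ^ n) | f n. Cinf f}"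
  have "Cinf (\<lambda>x. f x / g x ^ 1)"
  proof (rule Cinf_coind[where T="?T"])
    fix h assume "h \<in> ?T"
    then obtain f n where h: "h = (\<lambda>x. f x / g x ^ n)" "Cinf f" by blast
    have d: "DERIV h x :> (deriv f x * g x - real n * f x * deriv g x) / g x ^ Suc n" for x
      unfolding h by (rule Cinf_divpow_step) (use g h in auto)
    then have "deriv h = (\<lambda>x. (deriv f x * g x - real n * f x * deriv g x) / g x ^ Suc n)"
      by (auto intro!: ext DERIV_imp_deriv)
    moreover have "Cinf (\<lambda>x. deriv f x * g x - real n * f x * deriv g x)"
    proof -
      have "Cinf (\<lambda>x. deriv f x * g x + (- real n) * (f x * deriv g x))"
        by (intro Cinf_add Cinf_mult Cinf_deriv Cinf_const h g)
      then show ?thesis by (simp add: algebra_simps)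
    qed
    ultimately have "deriv h \<in> ?T"
      by (intro CollectI exI[of _ "\<lambda>x. deriv f x * g x - real n * f x * deriv g x"] exI[of _ "Suc n"]) simp
    then show "(\<forall>x. h differentiable (at x)) \<and> deriv h \<in> ?T"
      using d real_differentiable_def by blast
  qed (use f in \<open>auto intro!: exI[of _ f] exI[of _ 1]\<close>)
  then show ?thesis by simp
qed

definition Fp :: "real poly \<Rightarrow> real \<Rightarrow> real" where
  "Fp p x = (if x > 0 then poly p (inverse x) * exp (- inverse x) else 0)"

lemma poly_exp_lim: "((\<lambda>y. poly p y * exp (- y)) \<longlongrightarrow> (0::real)) at_top"
proof -
  have "((\<lambda>y. \<Sum>i\<le>degree p. coeff p i * (y ^ i / exp y)) \<longlongrightarrow> (\<Sum>i\<le>degree p. coeff p i * 0)) at_top"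
    by (intro tendsto_sum tendsto_mult tendsto_const tendsto_power_div_exp_0)
  moreover have "(\<Sum>i\<le>degree p. coeff p i * (y ^ i / exp y)) = poly p y * exp (- y)" for y
  proof -
    have "(\<Sum>i\<le>degree p. coeff p i * (y ^ i / exp y)) = (\<Sum>i\<le>degree p. coeff p i * y ^ i) / exp y"
      by (simp add: sum_divide_distrib)
    also have "\<dots> = poly p y * exp (- y)" by (simp add: poly_altdef exp_minus field_simps)
    finally show ?thesis .
  qed
  ultimately show ?thesis by simp
qed

definition qpoly :: "real poly \<Rightarrow> real poly" where
  "qpoly p = [:0,0,1:] * (p - pderiv p)"

lemma Fp_deriv_pos:
  assumes x: "x > 0"
  shows "DERIV (Fp p) x :> Fp (qpoly p) x"
proof -
  have x0: "x \<noteq> 0" using x by simp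
  have d1: "DERIV (\<lambda>x. poly p (inverse x)) x :> poly (pderiv p) (inverse x) * (- (inverse x ^ Suc (Suc 0)))"
    by (rule DERIV_chain2[OF poly_DERIV DERIV_inverse[OF x0]])
  have d2: "DERIV (\<lambda>x. exp (- inverse x)) x :> exp (- inverse x) * (- (- (inverse x ^ Suc (Suc 0))))"
    by (rule DERIV_chain2[OF DERIV_exp DERIV_minus[OF DERIV_inverse[OF x0]]])
  have d: "DERIV (\<lambda>x. poly p (inverse x) * exp (- inverse x)) x :> Fp (qpoly p) x"
    using DERIV_mult[OF d1 d2] x
    by (simp add: Fp_def qpoly_def algebra_simps power2_eq_square)
  show ?thesis
    by (rule has_field_derivative_transform_within_open[OF d, of "{0<..}"]) (use x in \<open>auto simp: Fp_def\<close>)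
qed

lemma Fp_deriv_neg:
  assumes x: "x < 0"
  shows "DERIV (Fp p) x :> Fp (qpoly p) x"
proof -
  have "DERIV (\<lambda>x. 0::real) x :> 0" by simp
  then have "DERIV (Fp p) x :> 0"
    by (rule has_field_derivative_transform_within_open[of _ _ _ "{..<0}"]) (use x in \<open>auto simp: Fp_def\<close>)
  then show ?thesis using x by (simp add: Fp_def)
qed

lemma Fp_deriv_0: "DERIV (Fp p) 0 :> Fp (qpoly p) 0"
proof -
  have "((\<lambda>y. (Fp p y - Fp p 0) / (y - 0)) \<longlongrightarrow> 0) (at (0::real))"
  proof (rule filterlim_split_at)
    have "eventually (\<lambda>y::real. y < 0) (at_left 0)"
      by (simp add: eventually_at_filter)
    then have "eventually (\<lambda>y. 0 = (Fp p y - Fp p 0) / (y - 0)) (at_left 0)"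
      by eventually_elim (simp add: Fp_def)
    then show "((\<lambda>y. (Fp p y - Fp p 0) / (y - 0)) \<longlongrightarrow> 0) (at_left 0)"
      by (rule Lim_transform_eventually[OF tendsto_const])
  next
    have lim: "((\<lambda>y. poly (pCons 0 p) (inverse y) * exp (- inverse y)) \<longlongrightarrow> 0) (at_right (0::real))"
      by (rule filterlim_compose[OF poly_exp_lim filterlim_inverse_at_top_right])
    have "eventually (\<lambda>y::real. y > 0) (at_right 0)"
      by (simp add: eventually_at_filter)
    then have "eventually (\<lambda>y. poly (pCons 0 p) (inverse y) * exp (- inverse y) = (Fp p y - Fp p 0) / (y - 0)) (at_right 0)"
      by eventually_elim (simp add: Fp_def field_simps)
    then show "((\<lambda>y. (Fp p y - Fp p 0) / (y - 0)) \<longlongrightarrow> 0) (at_right 0)"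
      by (rule Lim_transform_eventually[OF lim])
  qed
  then have "DERIV (Fp p) 0 :> 0" by (simp add: has_field_derivative_iff)
  then show ?thesis by (simp add: Fp_def)
qed

lemma Fp_deriv: "DERIV (Fp p) x :> Fp (qpoly p) x"
  using Fp_deriv_pos Fp_deriv_neg Fp_deriv_0 by (cases "x > 0"; cases "x < 0") auto

lemma Cinf_Fp: "Cinf (Fp p)"
proof (rule Cinf_coind[where T="range Fp"])
  fix f assume "f \<in> range Fp"
  then obtain p where f: "f = Fp p" by blast
  have "deriv f = Fp (qpoly p)" unfolding f by (auto intro!: ext DERIV_imp_deriv Fp_deriv)
  then show "(\<forall>x. f differentiable (at x)) \<and> deriv f \<in> range Fp"
    using Fp_deriv f real_differentiable_def by blast
qed auto

definition E0 :: "real \<Rightarrow> real" where "E0 = Fp 1"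

lemma E0_Cinf: "Cinf E0" unfolding E0_def by (rule Cinf_Fp)
lemma E0_pos: "x > 0 \<Longrightarrow> E0 x > 0" by (simp add: E0_def Fp_def)
lemma E0_zero: "x \<le> 0 \<Longrightarrow> E0 x = 0" by (simp add: E0_def Fp_def)
lemma E0_nonneg: "E0 x \<ge> 0" by (simp add: E0_def Fp_def)

definition St :: "real \<Rightarrow> real \<Rightarrow> real \<Rightarrow> real" where
  "St a b x = E0 (x - a) / (E0 (x - a) + E0 (b - x))"

lemma St_den: "a < b \<Longrightarrow> E0 (x - a) + E0 (b - x) > 0"
  using E0_pos E0_nonneg by (cases "x > a") (auto intro: add_pos_nonneg add_nonneg_pos)

lemma Cinf_St: assumes "a < b" shows "Cinf (St a b)"
proof -
  have "Cinf (\<lambda>x. E0 (x - a) / (E0 (x - a) + E0 (b - x)))"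
    by (intro Cinf_divide Cinf_add Cinf_compose[OF E0_Cinf] Cinf_affine[of 1 "-a", simplified]
          Cinf_affine[of "-1" b, simplified])
       (use St_den[OF assms] in \<open>auto simp: less_le\<close>)
  then show ?thesis unfolding St_def[abs_def] .
qed

lemma St_low: "a < b \<Longrightarrow> x \<le> a \<Longrightarrow> St a b x = 0"
  by (simp add: St_def E0_zero)
lemma St_high: "a < b \<Longrightarrow> x \<ge> b \<Longrightarrow> St a b x = 1"
  using St_den[of a b x] by (simp add: St_def E0_zero)
lemma St_range: "a < b \<Longrightarrow> 0 \<le> St a b x \<and> St a b x \<le> 1"
  using St_den[of a b x] E0_nonneg[of "x-a"] E0_nonneg[of "b-x"] by (simp add: St_def divide_le_eq_1)
lemma St_pos: "a < b \<Longrightarrow> St a b x > 0 \<Longrightarrow> x > a"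
  by (metis St_low not_le order_less_irrefl)
lemma St_lt1: "a < b \<Longrightarrow> St a b x < 1 \<Longrightarrow> x < b"
  by (metis St_high not_le order_less_irrefl)

lemma Cinf_local:
  assumes "\<And>s0. \<exists>\<delta>>0. \<exists>\<phi>. Cinf \<phi> \<and> (\<forall>s. \<bar>s - s0\<bar> < \<delta> \<longrightarrow> F s = \<phi> s)"
  shows "Cinf F"
proof (rule Cinf_coind[where T="{F. \<forall>s0. \<exists>\<delta>>0. \<exists>\<phi>. Cinf \<phi> \<and> (\<forall>s. \<bar>s - s0\<bar> < \<delta> \<longrightarrow> F s = \<phi> s)}"])
  fix F assume F: "F \<in> {F. \<forall>s0. \<exists>\<delta>>0. \<exists>\<phi>. Cinf \<phi> \<and> (\<forall>s. \<bar>s - s0\<bar> < \<delta> \<longrightarrow> F s = \<phi> s)}"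
  have D: "DERIV F s :> deriv \<phi> s" if "Cinf \<phi>" "\<forall>s. \<bar>s - s0\<bar> < \<delta> \<longrightarrow> F s = \<phi> s" "\<bar>s - s0\<bar> < \<delta>" for \<phi> s0 \<delta> s
  proof (rule has_field_derivative_transform_within_open[OF Cinf_DERIV[OF that(1)], of "{s0-\<delta><..<s0+\<delta>}"])
    show "s \<in> {s0 - \<delta><..<s0 + \<delta>}" using that(3) by (auto simp: abs_less_iff)
    show "\<And>x. x \<in> {s0 - \<delta><..<s0 + \<delta>} \<Longrightarrow> \<phi> x = F x" using that(2) by (auto simp: abs_less_iff)
  qed auto
  have "F differentiable (at s0)" for s0
  proof -
    obtain \<delta> \<phi> where "\<delta> > 0" "Cinf \<phi>" "\<forall>s. \<bar>s - s0\<bar> < \<delta> \<longrightarrow> F s = \<phi> s" using F by blast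
    then have "DERIV F s0 :> deriv \<phi> s0" by (intro D) auto
    then show ?thesis using real_differentiable_def by auto
  qed
  moreover have "\<exists>\<delta>>0. \<exists>\<phi>. Cinf \<phi> \<and> (\<forall>s. \<bar>s - s0\<bar> < \<delta> \<longrightarrow> deriv F s = \<phi> s)" for s0
  proof -
    obtain \<delta> \<phi> where h: "\<delta> > 0" "Cinf \<phi>" "\<forall>s. \<bar>s - s0\<bar> < \<delta> \<longrightarrow> F s = \<phi> s" using F by blast
    have "deriv F s = deriv \<phi> s" if "\<bar>s - s0\<bar> < \<delta>" for s
      by (rule DERIV_imp_deriv, rule D[OF h(2) h(3) that])
    then show ?thesis using h Cinf_deriv
      by (intro exI[of _ \<delta>] exI[of _ "deriv \<phi>"]) auto
  qed
  ultimately show "(\<forall>x. F differentiable (at x)) \<and> deriv F \<in> {F. \<forall>s0. \<exists>\<delta>>0. \<exists>\<phi>. Cinf \<phi> \<and> (\<forall>s. \<bar>s - s0\<bar> < \<delta> \<longrightarrow> F s = \<phi> s)}"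
    by blast
qed (use assms in auto)

lemma cutoff_exists:
  assumes "\<delta> > 0"
  shows "\<exists>\<sigma>. Cinf \<sigma> \<and> (\<forall>s. \<bar>\<sigma> s - s0\<bar> < \<delta>) \<and> (\<forall>s. \<bar>s - s0\<bar> < \<delta>/2 \<longrightarrow> \<sigma> s = s)"
proof -
  define b where "b r = St 0 (\<delta>/2) (r + \<delta>) * St 0 (\<delta>/2) (\<delta> - r)" for r
  have hd: "0 < \<delta>/2" using assms by simp
  define \<sigma> where "\<sigma> s = s0 + (s - s0) * b (s - s0)" for s
  have "Cinf (\<lambda>s. s0 + (s - s0) * (St 0 (\<delta>/2) ((s - s0) + \<delta>) * St 0 (\<delta>/2) (\<delta> - (s - s0))))"
  proof -
    have a1: "Cinf (\<lambda>s. 1 * s + (\<delta> - s0))" by (rule Cinf_affine)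
    have a2: "Cinf (\<lambda>s. (-1) * s + (\<delta> + s0))" by (rule Cinf_affine)
    have a3: "Cinf (\<lambda>s. 1 * s + (- s0))" by (rule Cinf_affine)
    have "Cinf (\<lambda>s. s0 + (1 * s + (- s0)) * (St 0 (\<delta>/2) (1 * s + (\<delta> - s0)) * St 0 (\<delta>/2) ((-1) * s + (\<delta> + s0))))"
      by (intro Cinf_add Cinf_const Cinf_mult a3 Cinf_compose[OF Cinf_St[OF hd] a1] Cinf_compose[OF Cinf_St[OF hd] a2])
    then show ?thesis by (simp add: algebra_simps)
  qed
  then have c: "Cinf \<sigma>" unfolding \<sigma>_def b_def .
  have b01: "0 \<le> b r \<and> b r \<le> 1" for r
    using St_range[OF hd] unfolding b_def by (simp add: mult_le_one)
  have "\<bar>\<sigma> s - s0\<bar> < \<delta>" for s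
  proof (cases "\<bar>s - s0\<bar> < \<delta>")
    case True
    have "\<bar>(s - s0) * b (s - s0)\<bar> \<le> \<bar>s - s0\<bar>"
      using b01[of "s-s0"] by (simp add: abs_mult mult_left_le)
    then show ?thesis using True by (simp add: \<sigma>_def)
  next
    case False
    then have "s - s0 \<ge> \<delta> \<or> s - s0 \<le> -\<delta>" by auto
    then have "b (s - s0) = 0" unfolding b_def using St_low[OF hd] by auto
    then show ?thesis using assms by (simp add: \<sigma>_def)
  qed
  moreover have "\<sigma> s = s" if "\<bar>s - s0\<bar> < \<delta>/2" for s
  proof -
    have "St 0 (\<delta>/2) (s - s0 + \<delta>) = 1" "St 0 (\<delta>/2) (\<delta> - (s - s0)) = 1"
      using that by (auto intro!: St_high[OF hd] simp: field_simps; simp add: abs_less_iff; linarith)+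
    then have "b (s - s0) = 1" unfolding b_def by simp
    then show ?thesis by (simp add: \<sigma>_def)
  qed
  ultimately show ?thesis using c by blast
qed

lemma gbf_car[simp]: "fcar (gen_by_funs S F0) = S"
  and gbf_curv: "fcurv (gen_by_funs S F0) = {c. (\<forall>s. c s \<in> S) \<and> (\<forall>f\<in>F0. Cinf (f \<circ> c))}"
  and gbf_fun: "ffun (gen_by_funs S F0) = {f. \<forall>c\<in>fcurv (gen_by_funs S F0). Cinf (f \<circ> c)}"
  by (simp_all add: gen_by_funs_def Let_def)

lemma gbc_car[simp]: "fcar (gen_by_curves S C0) = S"
  and gbc_fun: "ffun (gen_by_curves S C0) = {f. \<forall>c\<in>C0. Cinf (f \<circ> c)}"
  and gbc_curv: "fcurv (gen_by_curves S C0) = {c. (\<forall>s. c s \<in> S) \<and> (\<forall>f\<in>ffun (gen_by_curves S C0). Cinf (f \<circ> c))}"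
  by (simp_all add: gen_by_curves_def Let_def)

lemma gbf_fun_curv: "f \<in> ffun (gen_by_funs S F0) \<Longrightarrow> c \<in> fcurv (gen_by_funs S F0) \<Longrightarrow> Cinf (f \<circ> c)"
  unfolding gbf_fun by blast

lemma frol_curv: "frolicher X \<Longrightarrow> x \<in> fcurv X \<longleftrightarrow> (\<forall>s. x s \<in> fcar X) \<and> (\<forall>f\<in>ffun X. Cinf (f \<circ> x))"
  unfolding frolicher_def by blast

lemma frol_fun: "frolicher X \<Longrightarrow> f \<in> ffun X \<longleftrightarrow> (\<forall>c\<in>fcurv X. Cinf (f \<circ> c))"
  unfolding frolicher_def by blast

lemma smooth_curve: "frolicher X \<Longrightarrow> smooth_map X W g \<Longrightarrow> h \<in> ffun W \<Longrightarrow> x \<in> fcurv X \<Longrightarrow> Cinf (h \<circ> g \<circ> x)"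
proof -
  assume a: "frolicher X" "smooth_map X W g" "h \<in> ffun W" "x \<in> fcurv X"
  then have "h \<circ> g \<in> ffun X" unfolding smooth_map_def by blast
  then show ?thesis using frol_fun[OF a(1)] a(4) by blast
qed

lemma unitI_car[simp]: "fcar unitI = {0..1}"
  by (simp add: unitI_def frol_subspace_def)

lemma unitI_curv: "fcurv unitI = {c. (\<forall>s. c s \<in> {0..1}) \<and> Cinf c}"
proof -
  have "fcurv unitI = {c. (\<forall>s. c s \<in> {0..1}) \<and> (\<forall>f\<in>{f. Cinf f}. Cinf (f \<circ> c))}"
    by (simp add: unitI_def frol_subspace_def gbf_curv real_frol_def)
  also have "\<dots> = {c. (\<forall>s. c s \<in> {0..1}) \<and> Cinf c}"
  proof (intro Collect_cong conj_cong refl iffI)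
    fix c assume "\<forall>f\<in>{f. Cinf f}. Cinf (f \<circ> c)"
    then have "Cinf ((\<lambda>x. x) \<circ> c)" using Cinf_id by blast
    then show "Cinf c" by (simp add: comp_def)
  next
    fix c assume "Cinf c" then show "\<forall>f\<in>{f. Cinf f}. Cinf (f \<circ> c)" using Cinf_o by blast
  qed
  finally show ?thesis .
qed

lemma unitI_fun: "f \<in> ffun unitI \<Longrightarrow> c \<in> fcurv unitI \<Longrightarrow> Cinf (f \<circ> c)"
  unfolding unitI_def frol_subspace_def by (rule gbf_fun_curv)

lemma boldI_car[simp]: "fcar boldI = {0..1}"
  by (simp add: boldI_def)

definition goodI :: "(real \<Rightarrow> real) set" where
  "goodI = {f \<in> ffun unitI. \<exists>\<epsilon>. 0 < \<epsilon> \<and> \<epsilon> < 1/4 \<and>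
         (\<forall>x. 0 \<le> x \<and> x < \<epsilon> \<longrightarrow> f x = f 0) \<and>
         (\<forall>x. 1 - \<epsilon> < x \<and> x \<le> 1 \<longrightarrow> f x = f 1)}"

lemma boldI_alt: "boldI = gen_by_funs {0..1} goodI"
  unfolding boldI_def goodI_def ..

lemma unitI_curv_smooth: "(\<forall>s. c s \<in> {0..1}) \<Longrightarrow> Cinf c \<Longrightarrow> c \<in> fcurv unitI"
  unfolding unitI_curv by auto

lemma boldI_curv_smooth: "(\<forall>s. c s \<in> {0..1}) \<Longrightarrow> Cinf c \<Longrightarrow> c \<in> fcurv boldI"
proof -
  assume a: "\<forall>s. c s \<in> {0..1}" "Cinf c"
  have "Cinf (f \<circ> c)" if "f \<in> goodI" for f
    using that unitI_fun[OF _ unitI_curv_smooth[OF a]] unfolding goodI_def by simp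
  then show ?thesis unfolding boldI_alt gbf_curv mem_Collect_eq using a by simp
qed

lemma goodI_boldI: "f \<in> goodI \<Longrightarrow> f \<in> ffun boldI"
proof -
  assume f: "f \<in> goodI"
  show ?thesis unfolding boldI_alt gbf_fun mem_Collect_eq
  proof
    fix c assume "c \<in> fcurv (gen_by_funs {0..1} goodI)"
    then show "Cinf (f \<circ> c)" unfolding gbf_curv mem_Collect_eq using f by simp
  qed
qed

lemma Cinf_unitI_fun: "Cinf f \<Longrightarrow> f \<in> ffun unitI"
proof -
  assume f: "Cinf f"
  have e: "ffun unitI = {f. \<forall>c\<in>fcurv unitI. Cinf (f \<circ> c)}"
    unfolding unitI_def frol_subspace_def by (rule gbf_fun)
  show ?thesis unfolding e unitI_curv using Cinf_o[OF f] by blast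
qed

lemma prod_car[simp]: "fcar (prod_frol P X) = fcar P \<times> fcar X"
  by (simp add: prod_frol_def)

lemma prod_curv: "c \<in> fcurv (prod_frol P X) \<longleftrightarrow> (\<forall>s. c s \<in> fcar P \<times> fcar X) \<and>
    (\<forall>f\<in>ffun P. Cinf (f \<circ> (fst \<circ> c))) \<and> (\<forall>g\<in>ffun X. Cinf (g \<circ> (snd \<circ> c)))"
proof -
  have "c \<in> fcurv (prod_frol P X) \<longleftrightarrow> (\<forall>s. c s \<in> fcar P \<times> fcar X) \<and>
    (\<forall>f\<in>ffun P. Cinf ((f \<circ> fst) \<circ> c)) \<and> (\<forall>g\<in>ffun X. Cinf ((g \<circ> snd) \<circ> c))"
    unfolding prod_frol_def gbf_curv by blast
  then show ?thesis by (simp only: o_assoc)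
qed

lemma prod_fun: "ffun (prod_frol P X) = {f. \<forall>c\<in>fcurv (prod_frol P X). Cinf (f \<circ> c)}"
  unfolding prod_frol_def by (rule gbf_fun)

lemma smooth_prod_curve: "smooth_map (prod_frol P X) W \<phi> \<Longrightarrow> h \<in> ffun W \<Longrightarrow> c \<in> fcurv (prod_frol P X) \<Longrightarrow> Cinf (h \<circ> \<phi> \<circ> c)"
proof -
  assume a: "smooth_map (prod_frol P X) W \<phi>" "h \<in> ffun W" "c \<in> fcurv (prod_frol P X)"
  then have "h \<circ> \<phi> \<in> ffun (prod_frol P X)" unfolding smooth_map_def by blast
  then show ?thesis using a(3) unfolding prod_fun by blast
qed

lemma smooth_prodI:
  assumes "\<And>p. p \<in> fcar P \<times> fcar X \<Longrightarrow> \<phi> p \<in> fcar W"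
    and "\<And>h c. h \<in> ffun W \<Longrightarrow> c \<in> fcurv (prod_frol P X) \<Longrightarrow> Cinf (h \<circ> \<phi> \<circ> c)"
  shows "smooth_map (prod_frol P X) W \<phi>"
  unfolding smooth_map_def prod_fun mem_Collect_eq prod_car using assms by (simp add: o_assoc)

lemma pair_curv:
  assumes "frolicher X" "\<forall>s. t s \<in> fcar P" "\<forall>f\<in>ffun P. Cinf (f \<circ> t)" "x \<in> fcurv X"
  shows "(\<lambda>s. (t s, x s)) \<in> fcurv (prod_frol P X)"
proof -
  have e: "fst \<circ> (\<lambda>s. (t s, x s)) = t" "snd \<circ> (\<lambda>s. (t s, x s)) = x" by (auto simp: fun_eq_iff)
  show ?thesis unfolding prod_curv e using assms(2,3) assms(4)[unfolded frol_curv[OF assms(1)]] by simp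
qed

lemma pair_curv_unitI:
  assumes "frolicher X" "\<forall>s. t s \<in> {0..1}" "Cinf t" "x \<in> fcurv X"
  shows "(\<lambda>s. (t s, x s)) \<in> fcurv (prod_frol unitI X)"
  using assms unitI_fun unitI_curv_smooth by (intro pair_curv) auto

lemma pair_curv_boldI:
  assumes "frolicher X" "\<forall>s. t s \<in> {0..1}" "Cinf t" "x \<in> fcurv X"
  shows "(\<lambda>s. (t s, x s)) \<in> fcurv (prod_frol boldI X)"
  using assms boldI_curv_smooth by (intro pair_curv) (auto simp: boldI_alt gbf_fun)

lemma prod_curv_unitI_D:
  assumes "frolicher X" "c \<in> fcurv (prod_frol unitI X)"
  shows "Cinf (fst \<circ> c)" "\<forall>s. fst (c s) \<in> {0..1}" "snd \<circ> c \<in> fcurv X"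
proof -
  have "(\<lambda>x. x) \<in> ffun unitI" by (rule Cinf_unitI_fun[OF Cinf_id])
  then have "Cinf ((\<lambda>x. x) \<circ> (fst \<circ> c))" using assms(2) unfolding prod_curv by blast
  then show "Cinf (fst \<circ> c)" by (simp add: comp_def)
  show "\<forall>s. fst (c s) \<in> {0..1}" using assms(2) unfolding prod_curv by (simp add: mem_Times_iff)
  show "snd \<circ> c \<in> fcurv X" using assms(2) unfolding prod_curv frol_curv[OF assms(1)] by (simp add: mem_Times_iff)
qed

lemma subsp_car[simp]: "fcar (frol_subspace X A) = A"
  by (simp add: frol_subspace_def)

lemma subsp_curv: "frolicher X \<Longrightarrow> A \<subseteq> fcar X \<Longrightarrow> c \<in> fcurv (frol_subspace X A) \<longleftrightarrow> (\<forall>s. c s \<in> A) \<and> c \<in> fcurv X"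
  unfolding frol_subspace_def gbf_curv mem_Collect_eq by (metis frol_curv subsetD)

lemma subsp_fun: "f \<in> ffun (frol_subspace X A) \<longleftrightarrow> (\<forall>c\<in>fcurv (frol_subspace X A). Cinf (f \<circ> c))"
  unfolding frol_subspace_def gbf_fun by simp

lemma equivclp_map:
  assumes "equivclp r a b" "\<And>x y. r x y \<Longrightarrow> s (F x) (F y)"
  shows "equivclp s (F a) (F b)"
  using assms(1)
proof (induction rule: equivclp_induct)
  case base then show ?case by simp
next
  case (step y z)
  then have "s (F y) (F z) \<or> s (F z) (F y)" using assms(2) by blast
  then show ?case using step(3) equivclp_into_equivclp by metis
qed

lemma equivclp_mono':
  assumes "equivclp r a b" "\<And>x y. r x y \<Longrightarrow> s x y"
  shows "equivclp s a b"
  using equivclp_map[of r a b s "\<lambda>x. x"] assms by simp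

lemma hcls_eq: "htpy_rel X x0 W w0 f g \<Longrightarrow> hcls X x0 W w0 f = hcls X x0 W w0 g"
  unfolding hcls_def htpy_rel_def by (auto intro: equivclp_trans equivclp_sym)

lemma hcls_self: "f \<in> pmaps X x0 W w0 \<Longrightarrow> f \<in> hcls X x0 W w0 f"
  unfolding hcls_def htpy_rel_def by simp

lemma hcls_mem: "g \<in> hcls X x0 W w0 f \<Longrightarrow> g \<in> pmaps X x0 W w0 \<and> htpy_rel X x0 W w0 f g"
  unfolding hcls_def by simp

lemma some_hcls: "f \<in> pmaps X x0 W w0 \<Longrightarrow> (SOME g. g \<in> hcls X x0 W w0 f) \<in> hcls X x0 W w0 f"
  by (rule someI[of _ f]) (rule hcls_self)

lemma phom_rel: "f \<in> pmaps X x0 W w0 \<Longrightarrow> g \<in> pmaps X x0 W w0 \<Longrightarrow> phomotopic X x0 W w0 f g \<Longrightarrow> htpy_rel X x0 W w0 f g"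
  unfolding htpy_rel_def by (rule r_into_equivclp) simp

lemma htpy_rel_trans: "htpy_rel X x0 W w0 f g \<Longrightarrow> htpy_rel X x0 W w0 g k \<Longrightarrow> htpy_rel X x0 W w0 f k"
  unfolding htpy_rel_def by (rule equivclp_trans)

lemma htpy_rel_sym: "htpy_rel X x0 W w0 f g \<Longrightarrow> htpy_rel X x0 W w0 g f"
  unfolding htpy_rel_def by (rule equivclp_sym)

lemma pmaps_smooth: "f \<in> pmaps X x0 W w0 \<Longrightarrow> smooth_map X W f" and pmaps_base: "f \<in> pmaps X x0 W w0 \<Longrightarrow> f x0 = w0"
  by (simp_all add: pmaps_def)

lemma smooth_car: "smooth_map X W f \<Longrightarrow> x \<in> fcar X \<Longrightarrow> f x \<in> fcar W"
  unfolding smooth_map_def by blast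

lemma agree_rel:
  assumes X: "frolicher X" and x0: "x0 \<in> fcar X"
    and f: "f \<in> pmaps X x0 W w0" and g: "g \<in> pmaps X x0 W w0" and eq: "\<And>x. x \<in> fcar X \<Longrightarrow> f x = g x"
  shows "htpy_rel X x0 W w0 f g"
proof (rule phom_rel[OF f g])
  let ?H = "\<lambda>p::real \<times> _. f (snd p)"
  have "smooth_map (prod_frol unitI X) W ?H"
  proof (rule smooth_prodI)
    fix p assume "p \<in> fcar unitI \<times> fcar X"
    then show "f (snd p) \<in> fcar W" using smooth_car[OF pmaps_smooth[OF f]] by auto
  next
    fix h c assume h: "h \<in> ffun W" and c: "c \<in> fcurv (prod_frol unitI X)"
    have "Cinf (h \<circ> f \<circ> (snd \<circ> c))"
      by (rule smooth_curve[OF X pmaps_smooth[OF f] h prod_curv_unitI_D(3)[OF X c]])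
    then show "Cinf (h \<circ> ?H \<circ> c)" by (simp add: comp_def)
  qed
  then show "phomotopic X x0 W w0 f g"
    unfolding phomotopic_def using eq pmaps_base[OF f] by (intro exI[of _ ?H]) auto
qed

lemma ffun_sub: "ffun X \<subseteq> ffun (frol_subspace X A)"
  unfolding frol_subspace_def gbf_fun gbf_curv by auto

lemma restrict_pmaps:
  assumes X: "frolicher X" and A: "A \<subseteq> fcar X" "x0 \<in> A" and f: "f \<in> pmaps X x0 W w0"
  shows "f \<in> pmaps (frol_subspace X A) x0 W w0"
proof -
  have "smooth_map (frol_subspace X A) W f"
    unfolding smooth_map_def
  proof (intro conjI ballI)
    fix x assume "x \<in> fcar (frol_subspace X A)"
    then show "f x \<in> fcar W" using smooth_car[OF pmaps_smooth[OF f]] A by auto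
  next
    fix h assume h: "h \<in> ffun W"
    show "h \<circ> f \<in> ffun (frol_subspace X A)"
      unfolding subsp_fun
    proof
      fix c assume "c \<in> fcurv (frol_subspace X A)"
      then have "c \<in> fcurv X" using subsp_curv[OF X A(1)] by blast
      then show "Cinf (h \<circ> f \<circ> c)" by (rule smooth_curve[OF X pmaps_smooth[OF f] h])
    qed
  qed
  then show ?thesis using f by (simp add: pmaps_def)
qed

lemma restrict_phom:
  assumes X: "frolicher X" and A: "A \<subseteq> fcar X" "x0 \<in> A"
    and H: "phomotopic X x0 W w0 f g"
  shows "phomotopic (frol_subspace X A) x0 W w0 f g"
proof -
  obtain H where H: "smooth_map (prod_frol unitI X) W H"
      "\<forall>x\<in>fcar X. H (0, x) = f x \<and> H (1, x) = g x" "\<forall>t\<in>{0..1}. H (t, x0) = w0"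
    using H unfolding phomotopic_def by blast
  have "smooth_map (prod_frol unitI (frol_subspace X A)) W H"
  proof (rule smooth_prodI)
    fix p assume "p \<in> fcar unitI \<times> fcar (frol_subspace X A)"
    then show "H p \<in> fcar W" using smooth_car[OF H(1)] A by auto
  next
    fix h c assume h: "h \<in> ffun W" and c: "c \<in> fcurv (prod_frol unitI (frol_subspace X A))"
    have "c \<in> fcurv (prod_frol unitI X)"
      using c A ffun_sub[of X A] unfolding prod_curv by (auto simp: mem_Times_iff)
    then show "Cinf (h \<circ> H \<circ> c)" by (rule smooth_prod_curve[OF H(1) h])
  qed
  then show ?thesis unfolding phomotopic_def using H A by (intro exI[of _ H]) auto
qed

lemma restrict_rel:
  assumes X: "frolicher X" and A: "A \<subseteq> fcar X" "x0 \<in> A"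
    and r: "htpy_rel X x0 W w0 f g"
  shows "htpy_rel (frol_subspace X A) x0 W w0 f g"
  using r unfolding htpy_rel_def
  by (rule equivclp_mono') (simp add: restrict_pmaps[OF X A] restrict_phom[OF X A])

lemma quot_car[simp]: "fcar (quotient_frol X A) = collapse A ` fcar X"
  by (simp add: quotient_frol_def)

lemma quot_fun: "\<phi> \<in> ffun (quotient_frol X A) \<longleftrightarrow> (\<forall>c\<in>fcurv X. Cinf (\<phi> \<circ> (collapse A \<circ> c)))"
  unfolding quotient_frol_def gbc_fun by blast

lemma quot_pmaps:
  assumes X: "frolicher X" and x0: "x0 \<in> A" and f: "f \<in> pmaps (quotient_frol X A) A W w0"
  shows "f \<circ> collapse A \<in> pmaps X x0 W w0"
proof -
  have sm: "smooth_map (quotient_frol X A) W f" using f by (simp add: pmaps_def)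
  have "smooth_map X W (f \<circ> collapse A)"
    unfolding smooth_map_def
  proof (intro conjI ballI)
    fix x assume "x \<in> fcar X"
    then show "(f \<circ> collapse A) x \<in> fcar W" using smooth_car[OF sm] by auto
  next
    fix h assume h: "h \<in> ffun W"
    then have "h \<circ> f \<in> ffun (quotient_frol X A)" using sm unfolding smooth_map_def by blast
    then show "h \<circ> (f \<circ> collapse A) \<in> ffun X"
      unfolding quot_fun frol_fun[OF X] by (simp add: o_assoc)
  qed
  moreover have "collapse A x0 = A" using x0 by (simp add: collapse_def)
  ultimately show ?thesis using f by (simp add: pmaps_def)
qed

lemma quot_phom:
  assumes X: "frolicher X" and x0: "x0 \<in> A"
    and H: "phomotopic (quotient_frol X A) A W w0 f g"
  shows "phomotopic X x0 W w0 (f \<circ> collapse A) (g \<circ> collapse A)"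
proof -
  obtain H where H: "smooth_map (prod_frol unitI (quotient_frol X A)) W H"
      "\<forall>x\<in>fcar (quotient_frol X A). H (0, x) = f x \<and> H (1, x) = g x" "\<forall>t\<in>{0..1}. H (t, A) = w0"
    using H unfolding phomotopic_def by blast
  let ?H = "\<lambda>p. H (fst p, collapse A (snd p))"
  have "smooth_map (prod_frol unitI X) W ?H"
  proof (rule smooth_prodI)
    fix p assume "p \<in> fcar unitI \<times> fcar X"
    then show "?H p \<in> fcar W" using smooth_car[OF H(1)] by (auto simp: mem_Times_iff)
  next
    fix h c assume h: "h \<in> ffun W" and c: "c \<in> fcurv (prod_frol unitI X)"
    let ?c = "\<lambda>s. (fst (c s), collapse A (snd (c s)))"
    have e1: "fst \<circ> ?c = fst \<circ> c" and e2: "snd \<circ> ?c = collapse A \<circ> (snd \<circ> c)" by (auto simp: fun_eq_iff)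
    have sc: "snd \<circ> c \<in> fcurv X" by (rule prod_curv_unitI_D(3)[OF X c])
    have "?c \<in> fcurv (prod_frol unitI (quotient_frol X A))"
      unfolding prod_curv e1 e2
    proof (intro conjI allI ballI)
      fix s show "?c s \<in> fcar unitI \<times> fcar (quotient_frol X A)"
        using c unfolding prod_curv by (auto simp: mem_Times_iff)
    next
      fix f assume "f \<in> ffun unitI" then show "Cinf (f \<circ> (fst \<circ> c))" using c unfolding prod_curv by blast
    next
      fix g assume "g \<in> ffun (quotient_frol X A)"
      then show "Cinf (g \<circ> (collapse A \<circ> (snd \<circ> c)))" using sc unfolding quot_fun by blast
    qed
    then have "Cinf (h \<circ> H \<circ> ?c)" by (rule smooth_prod_curve[OF H(1) h])
    then show "Cinf (h \<circ> ?H \<circ> c)" by (simp add: comp_def)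
  qed
  moreover have "\<forall>x\<in>fcar X. ?H (0, x) = (f \<circ> collapse A) x \<and> ?H (1, x) = (g \<circ> collapse A) x"
    using H(2) by auto
  moreover have "\<forall>t\<in>{0..1}. ?H (t, x0) = w0" using H(3) x0 by (simp add: collapse_def)
  ultimately show ?thesis unfolding phomotopic_def by blast
qed

lemma quot_rel:
  assumes X: "frolicher X" and x0: "x0 \<in> A"
    and r: "htpy_rel (quotient_frol X A) A W w0 f g"
  shows "htpy_rel X x0 W w0 (f \<circ> collapse A) (g \<circ> collapse A)"
  using r unfolding htpy_rel_def
proof (rule equivclp_map)
  fix a b assume ab: "a \<in> pmaps (quotient_frol X A) A W w0 \<and> b \<in> pmaps (quotient_frol X A) A W w0 \<and>
       phomotopic (quotient_frol X A) A W w0 a b"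
  show "a \<circ> collapse A \<in> pmaps X x0 W w0 \<and> b \<circ> collapse A \<in> pmaps X x0 W w0 \<and>
       phomotopic X x0 W w0 (a \<circ> collapse A) (b \<circ> collapse A)"
    using quot_pmaps[OF X x0, of a W w0] quot_pmaps[OF X x0, of b W w0] quot_phom[OF X x0, of W w0 a b] ab by blast
qed

lemma Cinf_pos_nbhd:
  assumes "Cinf f" "f s0 > 0"
  shows "\<exists>\<delta>>0. \<forall>s. \<bar>s - s0\<bar> < \<delta> \<longrightarrow> f s > 0"
proof -
  have "f \<midarrow>s0\<rightarrow> f s0" using Cinf_cont[OF assms(1)] by (simp add: isCont_def)
  then obtain d where d: "d > 0" "\<forall>x. x \<noteq> s0 \<and> norm (x - s0) < d \<longrightarrow> norm (f x - f s0) < f s0"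
    using assms(2) unfolding LIM_eq by blast
  have "f s > 0" if "\<bar>s - s0\<bar> < d" for s
  proof (cases "s = s0")
    case True then show ?thesis using assms(2) by simp
  next
    case False then have "\<bar>f s - f s0\<bar> < f s0" using d that by auto
    then show ?thesis by linarith
  qed
  then show ?thesis using d(1) by blast
qed

lemma goodI_St:
  assumes "1/8 \<le> a" "a < b" "b \<le> 7/8"
  shows "St a b \<in> goodI" "(\<lambda>v. 1 - St a b v) \<in> goodI"
proof -
  have ab: "a < b" by fact
  have c1: "Cinf (St a b)" by (rule Cinf_St[OF ab])
  have c2: "Cinf (\<lambda>v. 1 - St a b v)"
    using Cinf_add[OF Cinf_const Cinf_mult[OF Cinf_const c1], of 1 "-1"] by simp
  have lo: "St a b x = St a b 0" if "0 \<le> x" "x < 1/8" for x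
    using St_low[OF ab] that assms by auto
  have hi: "St a b x = St a b 1" if "1 - 1/8 < x" "x \<le> 1" for x
    using St_high[OF ab] that assms by auto
  have e: "(0::real) < 1/8" "(1/8::real) < 1/4" by auto
  show "St a b \<in> goodI" unfolding goodI_def mem_Collect_eq
    using Cinf_unitI_fun[OF c1] lo hi e by blast
  have lo': "1 - St a b x = 1 - St a b 0" if "0 \<le> x" "x < 1/8" for x using lo[OF that] by simp
  have hi': "1 - St a b x = 1 - St a b 1" if "1 - 1/8 < x" "x \<le> 1" for x using hi[OF that] by simp
  show "(\<lambda>v. 1 - St a b v) \<in> goodI" unfolding goodI_def mem_Collect_eq
    using Cinf_unitI_fun[OF c2] lo' hi' e by blast
qed

lemma phom_rev:
  assumes "phomotopic P x0 W w0 f g"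
  shows "phomotopic P x0 W w0 g f"
proof -
  obtain H where H: "smooth_map (prod_frol unitI P) W H"
      "\<forall>x\<in>fcar P. H (0, x) = f x \<and> H (1, x) = g x" "\<forall>t\<in>{0..1}. H (t, x0) = w0"
    using assms unfolding phomotopic_def by blast
  let ?H = "\<lambda>p. H (1 - fst p, snd p)"
  have "smooth_map (prod_frol unitI P) W ?H"
  proof (rule smooth_prodI)
    fix p assume "p \<in> fcar unitI \<times> fcar P"
    then show "?H p \<in> fcar W" using smooth_car[OF H(1)] by (auto simp: mem_Times_iff)
  next
    fix h c assume h: "h \<in> ffun W" and c: "c \<in> fcurv (prod_frol unitI P)"
    let ?c = "\<lambda>s. (1 - fst (c s), snd (c s))"
    have idf: "(\<lambda>x. x) \<in> ffun unitI" by (rule Cinf_unitI_fun[OF Cinf_id])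
    then have "Cinf ((\<lambda>x. x) \<circ> (fst \<circ> c))" using c unfolding prod_curv by blast
    then have ct: "Cinf (\<lambda>s. fst (c s))" by (simp add: comp_def)
    have ct2: "Cinf (\<lambda>s. 1 - fst (c s))"
      using Cinf_add[OF Cinf_const Cinf_mult[OF Cinf_const ct], of 1 "-1"] by simp
    have rng: "\<forall>s. fst (c s) \<in> {0..1}" using c unfolding prod_curv by (simp add: mem_Times_iff)
    have e1: "fst \<circ> ?c = (\<lambda>s. 1 - fst (c s))" and e2: "snd \<circ> ?c = snd \<circ> c" by (auto simp: fun_eq_iff)
    have "?c \<in> fcurv (prod_frol unitI P)"
      unfolding prod_curv e1 e2
    proof (intro conjI allI ballI)
      fix s show "?c s \<in> fcar unitI \<times> fcar P"
        using c rng unfolding prod_curv by (auto simp: mem_Times_iff)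
    next
      fix f assume "f \<in> ffun unitI"
      then show "Cinf (f \<circ> (\<lambda>s. 1 - fst (c s)))"
        using unitI_fun unitI_curv_smooth[OF _ ct2] rng by auto
    next
      fix g assume "g \<in> ffun P" then show "Cinf (g \<circ> (snd \<circ> c))" using c unfolding prod_curv by blast
    qed
    then have "Cinf (h \<circ> H \<circ> ?c)" by (rule smooth_prod_curve[OF H(1) h])
    then show "Cinf (h \<circ> ?H \<circ> c)" by (simp add: comp_def)
  qed
  then show ?thesis unfolding phomotopic_def using H by (intro exI[of _ ?H]) auto
qed

lemma slice1:
  assumes X: "frolicher X" and L: "smooth_map (prod_frol unitI X) W L"
  shows "smooth_map X W (\<lambda>x. L (1, x))"
  unfolding smooth_map_def
proof (intro conjI ballI)
  fix x assume "x \<in> fcar X" then show "L (1, x) \<in> fcar W" using smooth_car[OF L] by auto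
next
  fix h assume h: "h \<in> ffun W"
  show "h \<circ> (\<lambda>x. L (1, x)) \<in> ffun X"
    unfolding frol_fun[OF X]
  proof
    fix x assume x: "x \<in> fcurv X"
    have "(\<lambda>s. (1, x s)) \<in> fcurv (prod_frol unitI X)"
      using pair_curv_unitI[OF X _ Cinf_const x, of 1] by simp
    from smooth_prod_curve[OF L h this] show "Cinf (h \<circ> (\<lambda>x. L (1, x)) \<circ> x)" by (simp add: comp_def)
  qed
qed

lemma curv_reparam: "frolicher X \<Longrightarrow> x \<in> fcurv X \<Longrightarrow> Cinf \<sigma> \<Longrightarrow> x \<circ> \<sigma> \<in> fcurv X"
proof -
  assume X: "frolicher X" and x: "x \<in> fcurv X" and s: "Cinf \<sigma>"
  have "\<forall>f\<in>ffun X. Cinf ((f \<circ> x) \<circ> \<sigma>)" using x s Cinf_o unfolding frol_curv[OF X] by blast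
  then show ?thesis using x unfolding frol_curv[OF X] by (simp add: o_assoc)
qed

context
  fixes X :: "'a frol" and A :: "'a set" and x0 :: 'a and u :: "'a \<Rightarrow> real" and H :: "real \<times> 'a \<Rightarrow> 'a"
  assumes X: "frolicher X" and AX: "A \<subseteq> fcar X" and x0A: "x0 \<in> A"
    and u: "smooth_map X boldI u" and uA: "{x\<in>fcar X. u x = 0} = A"
    and Hs: "smooth_map (prod_frol boldI X) X H"
    and H0: "\<forall>x\<in>fcar X. H (0, x) = x" and HA: "\<forall>t\<in>{0..1}. \<forall>a\<in>A. H (t, a) = a"
    and H1: "\<forall>x\<in>fcar X. u x < 1 \<longrightarrow> H (1, x) \<in> A"
begin

lemma u_range: "x \<in> fcar X \<Longrightarrow> 0 \<le> u x \<and> u x \<le> 1"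
  using smooth_car[OF u] by auto

lemma uA0: "a \<in> A \<Longrightarrow> u a = 0"
  using uA by blast

lemma ucurve: "\<beta> \<in> goodI \<Longrightarrow> x \<in> fcurv X \<Longrightarrow> Cinf (\<lambda>s. \<beta> (u (x s)))"
proof -
  assume b: "\<beta> \<in> goodI" and x: "x \<in> fcurv X"
  have "\<beta> \<circ> u \<in> ffun X" using u goodI_boldI[OF b] unfolding smooth_map_def by blast
  then have "Cinf ((\<beta> \<circ> u) \<circ> x)" using x frol_fun[OF X] by blast
  then show ?thesis by (simp add: comp_def)
qed

lemma Hcurve:
  assumes "Cinf \<tau>" "\<forall>s. \<tau> s \<in> {0..1}" "x \<in> fcurv X"
  shows "(\<lambda>s. H (\<tau> s, x s)) \<in> fcurv X"
proof -
  have c: "(\<lambda>s. (\<tau> s, x s)) \<in> fcurv (prod_frol boldI X)" by (rule pair_curv_boldI[OF X assms(2,1,3)])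
  have xs: "\<forall>s. x s \<in> fcar X" using assms(3) frol_curv[OF X] by blast
  have "\<forall>f\<in>ffun X. Cinf (f \<circ> H \<circ> (\<lambda>s. (\<tau> s, x s)))"
    using smooth_prod_curve[OF Hs _ c] by blast
  moreover have "\<forall>s. H (\<tau> s, x s) \<in> fcar X" using smooth_car[OF Hs] xs assms(2) by auto
  ultimately show ?thesis unfolding frol_curv[OF X] by (simp add: comp_def)
qed

lemma HEP:
  fixes W :: "'b frol" and w0 :: 'b and g K
  assumes g: "g \<in> pmaps X x0 W w0"
    and K: "smooth_map (prod_frol unitI (frol_subspace X A)) W K"
    and K0: "\<forall>a\<in>A. K (0, a) = g a" and Kb: "\<forall>t\<in>{0..1}. K (t, x0) = w0"
  shows "\<exists>g2. g2 \<in> pmaps X x0 W w0 \<and> htpy_rel X x0 W w0 g g2 \<and> (\<forall>a\<in>A. g2 a = K (1, a))"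
proof -
  have x0X: "x0 \<in> fcar X" using x0A AX by blast
  define \<rho> where "\<rho> x = 1 - St (3/4) (7/8) (u x)" for x
  define \<psi> where "\<psi> x = 1 - St (1/4) (1/2) (u x)" for x
  have \<rho>g: "(\<lambda>v. 1 - St (3/4) (7/8) v) \<in> goodI" by (rule goodI_St(2)) auto
  have \<psi>g: "(\<lambda>v. 1 - St (1/4) (1/2) v) \<in> goodI" by (rule goodI_St(2)) auto
  have \<kappa>g: "(\<lambda>v. 1 - St (5/8) (3/4) v) \<in> goodI" by (rule goodI_St(2)) auto
  have lamg: "St (1/2) (5/8) \<in> goodI" by (rule goodI_St(1)) auto
  have \<rho>01: "0 \<le> \<rho> x \<and> \<rho> x \<le> 1" for x using St_range[of "3/4" "7/8" "u x"] by (simp add: \<rho>_def)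
  have \<psi>01: "0 \<le> \<psi> x \<and> \<psi> x \<le> 1" for x using St_range[of "1/4" "1/2" "u x"] by (simp add: \<psi>_def)
  have \<rho>1: "u x \<le> 3/4 \<Longrightarrow> \<rho> x = 1" for x using St_low[of "3/4" "7/8" "u x"] by (simp add: \<rho>_def)
  have \<psi>1: "u x \<le> 1/4 \<Longrightarrow> \<psi> x = 1" for x using St_low[of "1/4" "1/2" "u x"] by (simp add: \<psi>_def)
  have \<psi>0: "u x \<ge> 1/2 \<Longrightarrow> \<psi> x = 0" for x using St_high[of "1/4" "1/2" "u x"] by (simp add: \<psi>_def)
  have \<rho>c: "x \<in> fcurv X \<Longrightarrow> Cinf (\<lambda>s. \<rho> (x s))" for x using ucurve[OF \<rho>g] by (simp add: \<rho>_def)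
  have \<psi>c: "x \<in> fcurv X \<Longrightarrow> Cinf (\<lambda>s. \<psi> (x s))" for x using ucurve[OF \<psi>g] by (simp add: \<psi>_def)
  have gs: "smooth_map X W g" using g by (simp add: pmaps_def)
  have gx0: "g x0 = w0" using g by (simp add: pmaps_def)
  have mul01: "0 \<le> a * b \<and> a * b \<le> 1" if "0 \<le> a \<and> a \<le> 1" "0 \<le> b \<and> b \<le> (1::real)" for a b
    using that by (simp add: mult_le_one)
  have curvD: "Cinf (\<lambda>s. fst (c s))" "\<forall>s. fst (c s) \<in> {0..1}" "(\<lambda>s. snd (c s)) \<in> fcurv X"
      "\<forall>s. snd (c s) \<in> fcar X"
    if "c \<in> fcurv (prod_frol unitI X)" for c
  proof -
    show "Cinf (\<lambda>s. fst (c s))" using prod_curv_unitI_D(1)[OF X that] by (simp add: comp_def)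
    show "\<forall>s. fst (c s) \<in> {0..1}" using prod_curv_unitI_D(2)[OF X that] .
    show "(\<lambda>s. snd (c s)) \<in> fcurv X" using prod_curv_unitI_D(3)[OF X that] by (simp add: comp_def)
    from conjunct1[OF frol_curv[OF X, THEN iffD1, OF this]] show "\<forall>s. snd (c s) \<in> fcar X" by simp
  qed

  define L where "L p = g (H (fst p * \<rho> (snd p), snd p))" for p
  have Ls: "smooth_map (prod_frol unitI X) W L"
  proof (rule smooth_prodI)
    fix p assume p: "p \<in> fcar unitI \<times> fcar X"
    then have "fst p * \<rho> (snd p) \<in> {0..1}" using mul01[OF _ \<rho>01] by (auto simp: mem_Times_iff)
    then have "H (fst p * \<rho> (snd p), snd p) \<in> fcar X" using smooth_car[OF Hs] p by (auto simp: mem_Times_iff)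
    then show "L p \<in> fcar W" unfolding L_def by (rule smooth_car[OF gs])
  next
    fix h c assume h: "h \<in> ffun W" and c: "c \<in> fcurv (prod_frol unitI X)"
    note cd = curvD[OF c]
    have tc: "Cinf (\<lambda>s. fst (c s) * \<rho> (snd (c s)))" by (intro Cinf_mult cd(1) \<rho>c[OF cd(3)])
    have tr: "\<forall>s. fst (c s) * \<rho> (snd (c s)) \<in> {0..1}" using cd(2) mul01[OF _ \<rho>01] by auto
    have y: "(\<lambda>s. H (fst (c s) * \<rho> (snd (c s)), snd (c s))) \<in> fcurv X" by (rule Hcurve[OF tc tr cd(3)])
    from smooth_curve[OF X gs h y] show "Cinf (h \<circ> L \<circ> c)" by (simp add: comp_def L_def)
  qed
  define g1 where "g1 x = L (1, x)" for x
  have g1_eq: "g1 x = g (H (\<rho> x, x))" for x by (simp add: g1_def L_def)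
  have g1s: "smooth_map X W g1" unfolding g1_def by (rule slice1[OF X Ls])
  have g1x0: "g1 x0 = w0" using HA x0A \<rho>01[of x0] gx0 by (simp add: g1_eq)
  have g1p: "g1 \<in> pmaps X x0 W w0" using g1s g1x0 by (simp add: pmaps_def)
  have L01: "\<forall>x\<in>fcar X. L (0, x) = g x \<and> L (1, x) = g1 x" using H0 by (simp add: L_def g1_def)
  have Lx0: "\<forall>t\<in>{0..1}. L (t, x0) = w0"
  proof
    fix t :: real assume t: "t \<in> {0..1}"
    then have "t * \<rho> x0 \<in> {0..1}" using mul01[OF _ \<rho>01] by auto
    then show "L (t, x0) = w0" using HA x0A gx0 by (simp add: L_def)
  qed
  have hom1: "phomotopic X x0 W w0 g g1"
    unfolding phomotopic_def using Ls L01 Lx0 by blast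

  have HA1: "H (1, x) \<in> A" if "x \<in> fcar X" "u x < 3/4" for x using H1 that by auto
  have g1H: "g1 x = g (H (1, x))" if "x \<in> fcar X" "u x < 3/4" for x
    using \<rho>1[of x] that by (simp add: g1_eq)
  define M where "M p = (if u (snd p) < 3/4 then K (fst p * \<psi> (snd p), H (1, snd p)) else g1 (snd p))" for p
  have Mz: "M (t, x) = g1 x" if "x \<in> fcar X" "\<psi> x = 0" for t x
  proof (cases "u x < 3/4")
    case True then show ?thesis using that K0 HA1[OF that(1) True] g1H[OF that(1) True] by (simp add: M_def)
  qed (simp add: M_def)
  have M0: "M (0, x) = g1 x" if "x \<in> fcar X" for x
  proof (cases "u x < 3/4")
    case True then show ?thesis using that K0 HA1[OF that(1) True] g1H[OF that(1) True] by (simp add: M_def)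
  qed (simp add: M_def)
  have Ms: "smooth_map (prod_frol unitI X) W M"
  proof (rule smooth_prodI)
    fix p assume p: "p \<in> fcar unitI \<times> fcar X"
    show "M p \<in> fcar W"
    proof (cases "u (snd p) < 3/4")
      case True
      have "fst p * \<psi> (snd p) \<in> {0..1}" using p mul01[OF _ \<psi>01] by (auto simp: mem_Times_iff)
      moreover have "H (1, snd p) \<in> A" using HA1[OF _ True] p by (auto simp: mem_Times_iff)
      ultimately have "(fst p * \<psi> (snd p), H (1, snd p)) \<in> fcar (prod_frol unitI (frol_subspace X A))" by simp
      then show ?thesis using True smooth_car[OF K] by (simp add: M_def)
    next
      case False then show ?thesis using p smooth_car[OF g1s] by (auto simp: M_def mem_Times_iff)
    qed
  next
    fix h c assume h: "h \<in> ffun W" and c: "c \<in> fcurv (prod_frol unitI X)"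
    note cd = curvD[OF c]
    show "Cinf (h \<circ> M \<circ> c)"
    proof (rule Cinf_local)
      fix s0
      show "\<exists>\<delta>>0. \<exists>\<phi>. Cinf \<phi> \<and> (\<forall>s. \<bar>s - s0\<bar> < \<delta> \<longrightarrow> (h \<circ> M \<circ> c) s = \<phi> s)"
      proof (cases "u (snd (c s0)) < 5/8")
        case True
        have kc: "Cinf (\<lambda>s. 1 - St (5/8) (3/4) (u (snd (c s))))" by (rule ucurve[OF \<kappa>g cd(3)])
        have "1 - St (5/8) (3/4) (u (snd (c s0))) > 0" using St_low[of "5/8" "3/4" "u (snd (c s0))"] True by simp
        then obtain \<delta> where \<delta>: "\<delta> > 0" "\<forall>s. \<bar>s - s0\<bar> < \<delta> \<longrightarrow> 1 - St (5/8) (3/4) (u (snd (c s))) > 0"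
          using Cinf_pos_nbhd[OF kc] by blast
        have u34: "u (snd (c s)) < 3/4" if "\<bar>s - s0\<bar> < \<delta>" for s
          using \<delta>(2) that St_lt1[of "5/8" "3/4" "u (snd (c s))"] by auto
        obtain \<sigma> where \<sigma>: "Cinf \<sigma>" "\<forall>s. \<bar>\<sigma> s - s0\<bar> < \<delta>" "\<forall>s. \<bar>s - s0\<bar> < \<delta>/2 \<longrightarrow> \<sigma> s = s"
          using cutoff_exists[OF \<delta>(1)] by blast
        have x\<sigma>: "(\<lambda>s. snd (c (\<sigma> s))) \<in> fcurv X"
          using curv_reparam[OF X cd(3) \<sigma>(1)] by (simp add: comp_def)
        have x\<sigma>car: "\<forall>s. snd (c (\<sigma> s)) \<in> fcar X" using cd(4) by simp
        define \<tau>2 where "\<tau>2 s = fst (c (\<sigma> s)) * \<psi> (snd (c (\<sigma> s)))" for s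
        define y2 where "y2 s = H (1, snd (c (\<sigma> s)))" for s
        have \<tau>2c: "Cinf \<tau>2" unfolding \<tau>2_def[abs_def]
          by (intro Cinf_mult Cinf_compose[OF cd(1) \<sigma>(1)] \<psi>c[OF x\<sigma>])
        have \<tau>2r: "\<forall>s. \<tau>2 s \<in> {0..1}" unfolding \<tau>2_def using cd(2) mul01[OF _ \<psi>01] by auto
        have y2X: "y2 \<in> fcurv X" unfolding y2_def[abs_def]
          using Hcurve[OF Cinf_const _ x\<sigma>, of 1] by simp
        have y2A: "\<forall>s. y2 s \<in> A" unfolding y2_def using HA1 x\<sigma>car u34 \<sigma>(2) by blast
        have y2S: "y2 \<in> fcurv (frol_subspace X A)" using subsp_curv[OF X AX] y2X y2A by blast
        let ?c2 = "\<lambda>s. (\<tau>2 s, y2 s)"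
        have e1: "fst \<circ> ?c2 = \<tau>2" and e2: "snd \<circ> ?c2 = y2" by (auto simp: fun_eq_iff)
        have c2: "?c2 \<in> fcurv (prod_frol unitI (frol_subspace X A))"
          unfolding prod_curv e1 e2
        proof (intro conjI allI ballI)
          fix s show "?c2 s \<in> fcar unitI \<times> fcar (frol_subspace X A)" using \<tau>2r y2A by auto
        next
          fix f assume "f \<in> ffun unitI" then show "Cinf (f \<circ> \<tau>2)"
            using unitI_fun unitI_curv_smooth[OF \<tau>2r \<tau>2c] by blast
        next
          fix f assume "f \<in> ffun (frol_subspace X A)" then show "Cinf (f \<circ> y2)"
            using y2S unfolding subsp_fun by blast
        qed
        have \<phi>c: "Cinf (h \<circ> K \<circ> ?c2)" by (rule smooth_prod_curve[OF K h c2])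
        have "(h \<circ> M \<circ> c) s = (h \<circ> K \<circ> ?c2) s" if "\<bar>s - s0\<bar> < \<delta>/2" for s
        proof -
          have "\<sigma> s = s" using \<sigma>(3) that by blast
          moreover have "\<bar>s - s0\<bar> < \<delta>" using that \<delta>(1) by simp
          ultimately show ?thesis using u34[of s] by (simp add: M_def \<tau>2_def y2_def)
        qed
        then show ?thesis using \<delta>(1) \<phi>c by (intro exI[of _ "\<delta>/2"] exI[of _ "h \<circ> K \<circ> ?c2"]) auto
      next
        case False
        have lc: "Cinf (\<lambda>s. St (1/2) (5/8) (u (snd (c s))))" by (rule ucurve[OF lamg cd(3)])
        have "St (1/2) (5/8) (u (snd (c s0))) > 0" using St_high[of "1/2" "5/8" "u (snd (c s0))"] False by simp
        then obtain \<delta> where \<delta>: "\<delta> > 0" "\<forall>s. \<bar>s - s0\<bar> < \<delta> \<longrightarrow> St (1/2) (5/8) (u (snd (c s))) > 0"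
          using Cinf_pos_nbhd[OF lc] by blast
        have "(h \<circ> M \<circ> c) s = (h \<circ> g1 \<circ> (\<lambda>s. snd (c s))) s" if "\<bar>s - s0\<bar> < \<delta>" for s
        proof -
          have "u (snd (c s)) > 1/2" using \<delta>(2) that St_pos[of "1/2" "5/8" "u (snd (c s))"] by auto
          then have "\<psi> (snd (c s)) = 0" using \<psi>0 by simp
          then have "M (fst (c s), snd (c s)) = g1 (snd (c s))" using Mz cd(4) by blast
          then show ?thesis by simp
        qed
        moreover have "Cinf (h \<circ> g1 \<circ> (\<lambda>s. snd (c s)))" by (rule smooth_curve[OF X g1s h cd(3)])
        ultimately show ?thesis using \<delta>(1) by blast
      qed
    qed
  qed
  define g2 where "g2 x = M (1, x)" for x
  have g2s: "smooth_map X W g2" unfolding g2_def by (rule slice1[OF X Ms])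
  have Mx0: "M (t, x0) = w0" if "t \<in> {0..1}" for t
  proof -
    have "u x0 = 0" by (rule uA0[OF x0A])
    then have "\<psi> x0 = 1" using \<psi>1 by simp
    moreover have "H (1, x0) = x0" using HA x0A by simp
    ultimately show ?thesis using Kb that \<open>u x0 = 0\<close> by (simp add: M_def)
  qed
  have g2p: "g2 \<in> pmaps X x0 W w0" using g2s Mx0[of 1] by (simp add: pmaps_def g2_def)
  have hom2: "phomotopic X x0 W w0 g1 g2"
    unfolding phomotopic_def using Ms M0 Mx0 by (intro exI[of _ M]) (auto simp: g2_def)
  have g2A: "g2 a = K (1, a)" if "a \<in> A" for a
  proof -
    have "u a = 0" by (rule uA0[OF that])
    then have "\<psi> a = 1" using \<psi>1 by simp
    moreover have "H (1, a) = a" using HA that by simp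
    ultimately show ?thesis using \<open>u a = 0\<close> by (simp add: M_def g2_def)
  qed
  have "htpy_rel X x0 W w0 g g2"
    using htpy_rel_trans[OF phom_rel[OF g g1p hom1] phom_rel[OF g1p g2p hom2]] .
  then show ?thesis using g2p g2A by blast
qed

end

lemma agree_rel':
  assumes f: "f \<in> pmaps P x0 W w0" and g: "g \<in> pmaps P x0 W w0" and eq: "\<And>x. x \<in> fcar P \<Longrightarrow> f x = g x"
  shows "htpy_rel P x0 W w0 f g"
proof (rule phom_rel[OF f g])
  let ?H = "\<lambda>p::real \<times> _. f (snd p)"
  have "smooth_map (prod_frol unitI P) W ?H"
  proof (rule smooth_prodI)
    fix p assume "p \<in> fcar unitI \<times> fcar P"
    then show "f (snd p) \<in> fcar W" using smooth_car[OF pmaps_smooth[OF f]] by auto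
  next
    fix h c assume h: "h \<in> ffun W" and c: "c \<in> fcurv (prod_frol unitI P)"
    have "h \<circ> f \<in> ffun P" using pmaps_smooth[OF f] h unfolding smooth_map_def by blast
    then have "Cinf ((h \<circ> f) \<circ> (snd \<circ> c))" using c unfolding prod_curv by blast
    then show "Cinf (h \<circ> ?H \<circ> c)" by (simp add: comp_def)
  qed
  then show "phomotopic P x0 W w0 f g"
    unfolding phomotopic_def using eq pmaps_base[OF f] by (intro exI[of _ ?H]) auto
qed

lemma const_pmaps:
  assumes "w0 \<in> fcar W"
  shows "(\<lambda>_. w0) \<in> pmaps (frol_subspace X A) x0 W w0"
proof -
  have "smooth_map (frol_subspace X A) W (\<lambda>_. w0)"
    unfolding smooth_map_def subsp_fun using assms by (simp add: comp_def Cinf_const)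
  then show ?thesis by (simp add: pmaps_def)
qed

lemma null_ext:
  assumes X: "frolicher X" and AX: "A \<subseteq> fcar X" and x0A: "x0 \<in> A" and S: "SNDR X A"
    and k: "htpy_rel (frol_subspace X A) x0 W w0 k (\<lambda>_. w0)"
  shows "\<forall>g\<in>pmaps X x0 W w0. (\<forall>a\<in>A. g a = k a) \<longrightarrow>
           (\<exists>g'. g' \<in> pmaps X x0 W w0 \<and> htpy_rel X x0 W w0 g g' \<and> (\<forall>a\<in>A. g' a = w0))"
proof -
  obtain u H where u: "smooth_map X boldI u" and uA: "{x\<in>fcar X. u x = 0} = A"
    and Hs: "smooth_map (prod_frol boldI X) X H"
    and H0: "\<forall>x\<in>fcar X. H (0, x) = x" and HA: "\<forall>t\<in>{0..1}. \<forall>a\<in>A. H (t, a) = a"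
    and H1: "\<forall>x\<in>fcar X. u x < 1 \<longrightarrow> H (1, x) \<in> A"
    using S unfolding SNDR_def by blast
  note hep = HEP[OF X AX x0A u uA Hs H0 HA H1]
  show ?thesis
    using k[unfolded htpy_rel_def]
  proof (induction rule: converse_equivclp_induct)
    case base
    show ?case
    proof (intro ballI impI)
      fix g assume "g \<in> pmaps X x0 W w0" "\<forall>a\<in>A. g a = w0"
      then show "\<exists>g'. g' \<in> pmaps X x0 W w0 \<and> htpy_rel X x0 W w0 g g' \<and> (\<forall>a\<in>A. g' a = w0)"
        by (intro exI[of _ g]) (simp add: htpy_rel_def)
    qed
  next
    case (step y z)
    have "phomotopic (frol_subspace X A) x0 W w0 y z"
    proof (cases "phomotopic (frol_subspace X A) x0 W w0 y z")
      case False then show ?thesis using step(1) phom_rev[of "frol_subspace X A" x0 W w0 z y] by simp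
    qed
    then obtain K where K: "smooth_map (prod_frol unitI (frol_subspace X A)) W K"
      "\<forall>x\<in>A. K (0, x) = y x \<and> K (1, x) = z x" "\<forall>t\<in>{0..1}. K (t, x0) = w0"
      unfolding phomotopic_def by auto
    show ?case
    proof (intro ballI impI)
      fix g assume g: "g \<in> pmaps X x0 W w0" and gy: "\<forall>a\<in>A. g a = y a"
      have "\<forall>a\<in>A. K (0, a) = g a" using K(2) gy by simp
      then obtain g2 where g2: "g2 \<in> pmaps X x0 W w0" "htpy_rel X x0 W w0 g g2" "\<forall>a\<in>A. g2 a = K (1, a)"
        using hep[OF g K(1) _ K(3)] by blast
      have "\<forall>a\<in>A. g2 a = z a" using g2(3) K(2) by simp
      then obtain g' where "g' \<in> pmaps X x0 W w0" "htpy_rel X x0 W w0 g2 g'" "\<forall>a\<in>A. g' a = w0"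
        using step(3) g2(1) by blast
      then show "\<exists>g'. g' \<in> pmaps X x0 W w0 \<and> htpy_rel X x0 W w0 g g' \<and> (\<forall>a\<in>A. g' a = w0)"
        using htpy_rel_trans[OF g2(2)] by blast
    qed
  qed
qed

theorem lemma6:
  fixes X :: "'a frol" and x0 :: 'a and A :: "'a set"
    and W :: "'b frol" and w0 :: 'b
  assumes "frolicher X" and "x0 \<in> fcar X"
    and "frolicher W" and "w0 \<in> fcar W"
    and "A \<subseteq> fcar X" and "x0 \<in> A"
    and "SNDR X A"
  shows "pullback X x0 W w0 (collapse A) ` htpy_set (quotient_frol X A) A W w0
         = {c \<in> htpy_set X x0 W w0.
              pullback (frol_subspace X A) x0 W w0 id c = hcls (frol_subspace X A) x0 W w0 (\<lambda>_. w0)}"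
proof -
  note X = assms(1) and x0X = assms(2) and w0W = assms(4) and AX = assms(5) and x0A = assms(6) and S = assms(7)
  let ?Q = "quotient_frol X A" and ?S = "frol_subspace X A" and ?c0 = "\<lambda>_::'a. w0"
  have c0S: "?c0 \<in> pmaps ?S x0 W w0" by (rule const_pmaps[OF w0W])
  show ?thesis
  proof (intro equalityI subsetI)
    fix c assume "c \<in> pullback X x0 W w0 (collapse A) ` htpy_set ?Q A W w0"
    then obtain f0 where f0: "f0 \<in> pmaps ?Q A W w0" and c: "c = pullback X x0 W w0 (collapse A) (hcls ?Q A W w0 f0)"
      unfolding htpy_set_def by blast
    define f where "f = (SOME f. f \<in> hcls ?Q A W w0 f0)"
    have "f \<in> hcls ?Q A W w0 f0" unfolding f_def by (rule some_hcls[OF f0])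
    then have fp: "f \<in> pmaps ?Q A W w0" using hcls_mem[of f] by simp
    have fc: "f \<circ> collapse A \<in> pmaps X x0 W w0" by (rule quot_pmaps[OF X x0A fp])
    have c': "c = hcls X x0 W w0 (f \<circ> collapse A)" unfolding c pullback_def f_def ..
    have "c \<in> htpy_set X x0 W w0" unfolding c' htpy_set_def using fc by blast
    moreover have "pullback ?S x0 W w0 id c = hcls ?S x0 W w0 ?c0"
    proof -
      define g where "g = (SOME g. g \<in> c)"
      have "g \<in> c" unfolding g_def c' by (rule some_hcls[OF fc])
      then have gp: "g \<in> pmaps X x0 W w0" and r: "htpy_rel X x0 W w0 (f \<circ> collapse A) g"
        unfolding c' using hcls_mem[of g] by simp_all
      have r1: "htpy_rel ?S x0 W w0 g (f \<circ> collapse A)"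
        by (rule htpy_rel_sym[OF restrict_rel[OF X AX x0A r]])
      have fA: "f A = w0" using fp by (simp add: pmaps_def)
      have r2: "htpy_rel ?S x0 W w0 (f \<circ> collapse A) ?c0"
        by (rule agree_rel'[OF restrict_pmaps[OF X AX x0A fc] c0S]) (simp add: collapse_def fA)
      have "pullback ?S x0 W w0 id c = hcls ?S x0 W w0 g" unfolding pullback_def g_def by simp
      also have "\<dots> = hcls ?S x0 W w0 ?c0" by (rule hcls_eq[OF htpy_rel_trans[OF r1 r2]])
      finally show ?thesis .
    qed
    ultimately show "c \<in> {c \<in> htpy_set X x0 W w0. pullback ?S x0 W w0 id c = hcls ?S x0 W w0 ?c0}" by blast
  next
    fix c assume "c \<in> {c \<in> htpy_set X x0 W w0. pullback ?S x0 W w0 id c = hcls ?S x0 W w0 ?c0}"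
    then have cH: "c \<in> htpy_set X x0 W w0" and cP: "pullback ?S x0 W w0 id c = hcls ?S x0 W w0 ?c0" by auto
    then obtain f0 where f0: "f0 \<in> pmaps X x0 W w0" and c: "c = hcls X x0 W w0 f0"
      unfolding htpy_set_def by blast
    define g where "g = (SOME g. g \<in> c)"
    have "g \<in> c" unfolding g_def c by (rule some_hcls[OF f0])
    then have gp: "g \<in> pmaps X x0 W w0" and r0: "htpy_rel X x0 W w0 f0 g"
      unfolding c using hcls_mem[of g] by simp_all
    have "hcls ?S x0 W w0 g = hcls ?S x0 W w0 ?c0" using cP unfolding pullback_def g_def by simp
    then have "?c0 \<in> hcls ?S x0 W w0 g" using hcls_self[OF c0S] by simp
    then have rk: "htpy_rel ?S x0 W w0 g ?c0" using hcls_mem[of ?c0] by simp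
    obtain g' where g': "g' \<in> pmaps X x0 W w0" "htpy_rel X x0 W w0 g g'" "\<forall>a\<in>A. g' a = w0"
      using null_ext[OF X AX x0A S rk] gp by blast
    define f where "f S = (if S = A then w0 else g' (SOME x. x \<in> S))" for S
    have fcol: "f (collapse A x) = g' x" if "x \<in> fcar X" for x
    proof (cases "x \<in> A")
      case True then show ?thesis using g'(3) by (simp add: f_def collapse_def)
    next
      case False
      then have "{x} \<noteq> A" by auto
      then show ?thesis using False by (simp add: f_def collapse_def)
    qed
    have g's: "smooth_map X W g'" using g'(1) by (simp add: pmaps_def)
    have fs: "smooth_map ?Q W f"
      unfolding smooth_map_def
    proof (intro conjI ballI)
      fix S assume "S \<in> fcar ?Q"
      then obtain x where "x \<in> fcar X" "S = collapse A x" by auto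
      then show "f S \<in> fcar W" using fcol smooth_car[OF g's] by simp
    next
      fix h assume h: "h \<in> ffun W"
      show "h \<circ> f \<in> ffun ?Q"
        unfolding quot_fun
      proof
        fix x assume x: "x \<in> fcurv X"
        have xs: "\<forall>s. x s \<in> fcar X" using x frol_curv[OF X] by blast
        have "h \<circ> f \<circ> (collapse A \<circ> x) = h \<circ> g' \<circ> x" using fcol xs by (simp add: fun_eq_iff)
        then show "Cinf (h \<circ> f \<circ> (collapse A \<circ> x))" using smooth_curve[OF X g's h x] by simp
      qed
    qed
    have fA: "f A = w0" by (simp add: f_def)
    have fp: "f \<in> pmaps ?Q A W w0" using fs fA by (simp add: pmaps_def)
    have fc: "f \<circ> collapse A \<in> pmaps X x0 W w0" by (rule quot_pmaps[OF X x0A fp])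
    define f' where "f' = (SOME f'. f' \<in> hcls ?Q A W w0 f)"
    have "f' \<in> hcls ?Q A W w0 f" unfolding f'_def by (rule some_hcls[OF fp])
    then have r': "htpy_rel ?Q A W w0 f f'" using hcls_mem[of f'] by simp
    have r1: "htpy_rel X x0 W w0 (f \<circ> collapse A) (f' \<circ> collapse A)" by (rule quot_rel[OF X x0A r'])
    have r2: "htpy_rel X x0 W w0 g' (f \<circ> collapse A)"
      by (rule agree_rel'[OF g'(1) fc]) (simp add: fcol)
    have "htpy_rel X x0 W w0 f0 (f' \<circ> collapse A)"
      using htpy_rel_trans[OF r0 htpy_rel_trans[OF g'(2) htpy_rel_trans[OF r2 r1]]] .
    then have "c = hcls X x0 W w0 (f' \<circ> collapse A)" unfolding c by (rule hcls_eq)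
    also have "\<dots> = pullback X x0 W w0 (collapse A) (hcls ?Q A W w0 f)" unfolding pullback_def f'_def ..
    finally have "c = pullback X x0 W w0 (collapse A) (hcls ?Q A W w0 f)" .
    moreover have "hcls ?Q A W w0 f \<in> htpy_set ?Q A W w0" unfolding htpy_set_def using fp by blast
    ultimately show "c \<in> pullback X x0 W w0 (collapse A) ` htpy_set ?Q A W w0" by blast
  qed
qed

end
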